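(* Let $R$ be a ring and $a\in R$. Then $a$ is feckly clean if and only if there exists an element $e\in R$ such that $$V(a-1)\subseteq V(e)\subseteq \operatorname{Max}(R)\setminus V(a)\quad\text{and}\quad eR(1-e)\subseteq J(R).$$
   Context: Rings are associative with identity, not necessarily commutative; $J(R)$ is the Jacobson radical. An element $u\in R$ is full if $RuR=R$. An element $a\in R$ is feckly clean if there exist $e\in R$ and a full element $u\in R$ with $a=e+u$ and $eR(1-e)\subseteq J(R)$. $\operatorname{Max}(R)$ is the set of all maximal (two-sided) ideals of $R$. For an ideal $I$, $V(I)=\{P\in\operatorname{Max}(R): I\subseteq P\}$, and for $a\in R$, $V(a)=V(RaR)$. *)

theory Defs
  imports Main
begin

definition left_ideal :: "'a::ring_1 set \<Rightarrow> bool" where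
  "left_ideal I \<longleftrightarrow> 0 \<in> I \<and> (\<forall>x\<in>I. \<forall>y\<in>I. x + y \<in> I) \<and> (\<forall>r x. x \<in> I \<longrightarrow> r * x \<in> I)"

definition two_sided_ideal :: "'a::ring_1 set \<Rightarrow> bool" where
  "two_sided_ideal I \<longleftrightarrow> 0 \<in> I \<and> (\<forall>x\<in>I. \<forall>y\<in>I. x + y \<in> I)
     \<and> (\<forall>r x. x \<in> I \<longrightarrow> r * x \<in> I) \<and> (\<forall>r x. x \<in> I \<longrightarrow> x * r \<in> I)"

definition maximal_left_ideal :: "'a::ring_1 set \<Rightarrow> bool" where
  "maximal_left_ideal M \<longleftrightarrow> left_ideal M \<and> M \<noteq> UNIV \<and>
     (\<forall>I. left_ideal I \<and> M \<subseteq> I \<and> I \<noteq> UNIV \<longrightarrow> I = M)"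

definition maximal_ideal :: "'a::ring_1 set \<Rightarrow> bool" where
  "maximal_ideal M \<longleftrightarrow> two_sided_ideal M \<and> M \<noteq> UNIV \<and>
     (\<forall>I. two_sided_ideal I \<and> M \<subseteq> I \<and> I \<noteq> UNIV \<longrightarrow> I = M)"

definition jacobson :: "'a::ring_1 set" where
  "jacobson = \<Inter>{M. maximal_left_ideal M}"

definition ideal_gen :: "'a::ring_1 set \<Rightarrow> 'a set" where
  "ideal_gen S = \<Inter>{I. two_sided_ideal I \<and> S \<subseteq> I}"

definition full :: "'a::ring_1 \<Rightarrow> bool" where
  "full u \<longleftrightarrow> ideal_gen {u} = UNIV"

definition MaxSpec :: "'a::ring_1 set set" where
  "MaxSpec = {P. maximal_ideal P}"

definition VI :: "'a::ring_1 set \<Rightarrow> 'a set set" where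
  "VI I = {P \<in> MaxSpec. I \<subseteq> P}"

definition Vel :: "'a::ring_1 \<Rightarrow> 'a set set" where
  "Vel a = VI (ideal_gen {a})"

definition feckly_clean :: "'a::ring_1 \<Rightarrow> bool" where
  "feckly_clean a \<longleftrightarrow> (\<exists>e u. full u \<and> a = e + u \<and> (\<forall>r. e * r * (1 - e) \<in> jacobson))"

end

theory Submission
  imports Defs
begin

lemma ts_left: "two_sided_ideal I \<Longrightarrow> left_ideal I"
  by (simp add: two_sided_ideal_def left_ideal_def)

lemma li_UNIV: "left_ideal I \<Longrightarrow> 1 \<in> I \<Longrightarrow> I = UNIV"
  unfolding left_ideal_def by (metis UNIV_eq_I mult.right_neutral)

lemma li_neg: "left_ideal I \<Longrightarrow> x \<in> I \<Longrightarrow> - x \<in> I"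
  unfolding left_ideal_def by (metis mult_minus1)

lemma li_add: "left_ideal I \<Longrightarrow> x \<in> I \<Longrightarrow> y \<in> I \<Longrightarrow> x + y \<in> I"
  unfolding left_ideal_def by blast

lemma li_diff: "left_ideal I \<Longrightarrow> x \<in> I \<Longrightarrow> y \<in> I \<Longrightarrow> x - y \<in> I"
  by (metis li_add li_neg diff_conv_add_uminus)

lemma li_mult: "left_ideal I \<Longrightarrow> x \<in> I \<Longrightarrow> r * x \<in> I"
  unfolding left_ideal_def by blast

lemma ts_rmult: "two_sided_ideal I \<Longrightarrow> x \<in> I \<Longrightarrow> x * r \<in> I"
  unfolding two_sided_ideal_def by blast

lemma Vel_iff: "Vel a = {P. maximal_ideal P \<and> (a::'a::ring_1) \<in> P}"
proof -
  have "ideal_gen {a} \<subseteq> P \<longleftrightarrow> a \<in> P" if "two_sided_ideal P" for P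
  proof
    assume "ideal_gen {a} \<subseteq> P"
    moreover have "a \<in> ideal_gen {a}" unfolding ideal_gen_def by blast
    ultimately show "a \<in> P" by blast
  next
    assume "a \<in> P" then show "ideal_gen {a} \<subseteq> P" unfolding ideal_gen_def using that by blast
  qed
  then show ?thesis unfolding Vel_def VI_def MaxSpec_def maximal_ideal_def by blast
qed

lemma chain_union_left:
  assumes ne: "C \<noteq> {}" and Cid: "\<And>A. A \<in> C \<Longrightarrow> left_ideal (A::'a::ring_1 set)"
    and lin: "\<forall>x\<in>C. \<forall>y\<in>C. x \<subseteq> y \<or> y \<subseteq> x"
  shows "left_ideal (\<Union>C)"
  unfolding left_ideal_def
proof (intro conjI ballI allI impI)
  obtain A where A: "A \<in> C" using ne by blast
  then have "0 \<in> A" using Cid by (auto simp: left_ideal_def)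
  then show "0 \<in> \<Union>C" using A by blast
next
  fix x y assume "x \<in> \<Union>C" "y \<in> \<Union>C"
  then obtain A B where AB: "A \<in> C" "B \<in> C" "x \<in> A" "y \<in> B" by blast
  show "x + y \<in> \<Union>C"
  proof (cases "A \<subseteq> B")
    case True then have "x + y \<in> B" using li_add[OF Cid[OF AB(2)]] AB by blast
    then show ?thesis using AB by blast
  next
    case False then have "B \<subseteq> A" using lin AB by blast
    then have "x + y \<in> A" using li_add[OF Cid[OF AB(1)]] AB by blast
    then show ?thesis using AB by blast
  qed
next
  fix r x assume "x \<in> \<Union>C"
  then obtain A where "A \<in> C" "x \<in> A" by blast
  then show "r * x \<in> \<Union>C" using li_mult[OF Cid[OF \<open>A \<in> C\<close>]] by blast
qed

lemma chain_union_ts: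
  assumes ne: "C \<noteq> {}" and Cid: "\<And>A. A \<in> C \<Longrightarrow> two_sided_ideal (A::'a::ring_1 set)"
    and lin: "\<forall>x\<in>C. \<forall>y\<in>C. x \<subseteq> y \<or> y \<subseteq> x"
  shows "two_sided_ideal (\<Union>C)"
proof -
  have L: "left_ideal (\<Union>C)" using chain_union_left[OF ne _ lin] Cid ts_left by blast
  have "x * r \<in> \<Union>C" if xin: "x \<in> \<Union>C" for x r
  proof -
    obtain A where "A \<in> C" "x \<in> A" using xin by blast
    then show ?thesis using ts_rmult[OF Cid[OF \<open>A \<in> C\<close>]] by blast
  qed
  then show ?thesis using L unfolding left_ideal_def two_sided_ideal_def by blast
qed

lemma krull_ts:
  fixes I :: "'a::ring_1 set"
  assumes I: "two_sided_ideal I" and n1: "1 \<notin> I"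
  shows "\<exists>P. maximal_ideal P \<and> I \<subseteq> P"
proof -
  let ?S = "{J. two_sided_ideal J \<and> I \<subseteq> J \<and> (1::'a) \<notin> J}"
  have "\<exists>M\<in>?S. \<forall>X\<in>?S. M \<subseteq> X \<longrightarrow> X = M"
  proof (rule subset_Zorn_nonempty)
    show "?S \<noteq> {}" using I n1 by blast
  next
    fix C assume ne: "C \<noteq> {}" and ch: "subset.chain ?S C"
    then have CS: "C \<subseteq> ?S" and lin: "\<forall>x\<in>C. \<forall>y\<in>C. x \<subseteq> y \<or> y \<subseteq> x"
      by (auto simp: subset_chain_def)
    have Cid: "\<And>A. A \<in> C \<Longrightarrow> two_sided_ideal A" using CS by blast
    have "two_sided_ideal (\<Union>C)" using chain_union_ts[OF ne Cid lin] .
    moreover obtain A where "A \<in> C" using ne by blast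
    moreover have "1 \<notin> \<Union>C" using CS by blast
    ultimately show "\<Union>C \<in> ?S" using CS by blast
  qed
  then obtain M where M: "M \<in> ?S" and mx: "\<forall>X\<in>?S. M \<subseteq> X \<longrightarrow> X = M" by blast
  have "maximal_ideal M"
    unfolding maximal_ideal_def
  proof (intro conjI allI impI)
    show "two_sided_ideal M" using M by blast
    show "M \<noteq> UNIV" using M by blast
  next
    fix J assume J: "two_sided_ideal J \<and> M \<subseteq> J \<and> J \<noteq> UNIV"
    then have "1 \<notin> J" using li_UNIV ts_left by blast
    then have "J \<in> ?S" using M J by blast
    then show "J = M" using mx J by blast
  qed
  then show ?thesis using M by blast
qed

lemma krull_left:
  fixes I :: "'a::ring_1 set"
  assumes I: "left_ideal I" and n1: "1 \<notin> I"
  shows "\<exists>P. maximal_left_ideal P \<and> I \<subseteq> P"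
proof -
  let ?S = "{J. left_ideal J \<and> I \<subseteq> J \<and> (1::'a) \<notin> J}"
  have "\<exists>M\<in>?S. \<forall>X\<in>?S. M \<subseteq> X \<longrightarrow> X = M"
  proof (rule subset_Zorn_nonempty)
    show "?S \<noteq> {}" using I n1 by blast
  next
    fix C assume ne: "C \<noteq> {}" and ch: "subset.chain ?S C"
    then have CS: "C \<subseteq> ?S" and lin: "\<forall>x\<in>C. \<forall>y\<in>C. x \<subseteq> y \<or> y \<subseteq> x"
      by (auto simp: subset_chain_def)
    have Cid: "\<And>A. A \<in> C \<Longrightarrow> left_ideal A" using CS by blast
    have "left_ideal (\<Union>C)" using chain_union_left[OF ne Cid lin] .
    moreover obtain A where "A \<in> C" using ne by blast
    moreover have "1 \<notin> \<Union>C" using CS by blast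
    ultimately show "\<Union>C \<in> ?S" using CS by blast
  qed
  then obtain M where M: "M \<in> ?S" and mx: "\<forall>X\<in>?S. M \<subseteq> X \<longrightarrow> X = M" by blast
  have "maximal_left_ideal M"
    unfolding maximal_left_ideal_def
  proof (intro conjI allI impI)
    show "left_ideal M" using M by blast
    show "M \<noteq> UNIV" using M by blast
  next
    fix J assume J: "left_ideal J \<and> M \<subseteq> J \<and> J \<noteq> UNIV"
    then have "1 \<notin> J" using li_UNIV by blast
    then have "J \<in> ?S" using M J by blast
    then show "J = M" using mx J by blast
  qed
  then show ?thesis using M by blast
qed

lemma mli_rule: "maximal_left_ideal M \<Longrightarrow> left_ideal I \<Longrightarrow> M \<subseteq> I \<Longrightarrow> I \<noteq> UNIV \<Longrightarrow> I = M"
  unfolding maximal_left_ideal_def by blast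

lemma mi_rule: "maximal_ideal M \<Longrightarrow> two_sided_ideal I \<Longrightarrow> M \<subseteq> I \<Longrightarrow> I \<noteq> UNIV \<Longrightarrow> I = M"
  unfolding maximal_ideal_def by blast

lemma colon_max:
  fixes M :: "'a::ring_1 set"
  assumes M: "maximal_left_ideal M" and r: "r \<notin> M"
  shows "maximal_left_ideal {y. y * r \<in> M}"
proof -
  have LM: "left_ideal M" using M by (simp add: maximal_left_ideal_def)
  have LC: "left_ideal {y. y * r \<in> M}"
    unfolding left_ideal_def
  proof (intro conjI ballI allI impI)
    show "0 \<in> {y. y * r \<in> M}" using LM by (simp add: left_ideal_def)
  next
    fix a b assume "a \<in> {y. y * r \<in> M}" "b \<in> {y. y * r \<in> M}"
    then show "a + b \<in> {y. y * r \<in> M}" using li_add[OF LM] by (simp add: distrib_right)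
  next
    fix c a assume "a \<in> {y. y * r \<in> M}"
    then show "c * a \<in> {y. y * r \<in> M}" using li_mult[OF LM] by (simp add: mult.assoc)
  qed
  have ne: "{y. y * r \<in> M} \<noteq> UNIV"
  proof
    assume "{y. y * r \<in> M} = UNIV" then have "1 * r \<in> M" by blast
    then show False using r by simp
  qed
  have "I = UNIV" if I: "left_ideal I" and sub: "{y. y * r \<in> M} \<subseteq> I" and ns: "\<not> I \<subseteq> {y. y * r \<in> M}" for I
  proof -
    obtain y where y: "y \<in> I" "y * r \<notin> M" using ns by blast
    define K where "K = {m + s * (y * r) | m s. m \<in> M}"
    have LK: "left_ideal K" unfolding left_ideal_def K_def
    proof (intro conjI ballI allI impI)
      have "0 \<in> M" using LM by (simp add: left_ideal_def)
      moreover have "(0::'a) = 0 + 0 * (y * r)" by simp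
      ultimately show "0 \<in> {m + s * (y * r) |m s. m \<in> M}" by blast
    next
      fix a b assume "a \<in> {m + s * (y * r) |m s. m \<in> M}" "b \<in> {m + s * (y * r) |m s. m \<in> M}"
      then obtain m1 s1 m2 s2 where "a = m1 + s1 * (y*r)" "m1 \<in> M" "b = m2 + s2*(y*r)" "m2 \<in> M" by blast
      then show "a + b \<in> {m + s * (y * r) |m s. m \<in> M}"
      proof -
        have "a + b = (m1+m2) + (s1+s2)*(y*r)" using \<open>a = m1 + s1 * (y*r)\<close> \<open>b = m2 + s2*(y*r)\<close>
          by (simp add: algebra_simps)
        moreover have "m1 + m2 \<in> M" using li_add[OF LM] \<open>m1 \<in> M\<close> \<open>m2 \<in> M\<close> by blast
        ultimately show ?thesis by blast
      qed
    next
      fix c a assume "a \<in> {m + s * (y * r) |m s. m \<in> M}"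
      then obtain m1 s1 where "a = m1 + s1 * (y*r)" "m1 \<in> M" by blast
      then show "c * a \<in> {m + s * (y * r) |m s. m \<in> M}"
      proof -
        have "c * a = (c*m1) + (c*s1)*(y*r)" using \<open>a = m1 + s1 * (y*r)\<close>
          by (simp add: algebra_simps)
        moreover have "c*m1 \<in> M" using li_mult[OF LM] \<open>m1 \<in> M\<close> by blast
        ultimately show ?thesis by blast
      qed
    qed
    have Kmem: "m + s * (y * r) \<in> K" if "m \<in> M" for m s unfolding K_def using that by blast
    have "M \<subseteq> K" using Kmem[of _ 0] by auto
    moreover have "y * r \<in> K" using Kmem[of 0 1] LM by (simp add: left_ideal_def)
    ultimately have "K = UNIV" using mli_rule[OF M LK] y(2) by blast
    have "z \<in> I" for z
    proof -
      have "z * r \<in> K" using \<open>K = UNIV\<close> by simp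
      then obtain m s where ms: "z * r = m + s * (y * r)" "m \<in> M" unfolding K_def by blast
      then have "(z - s * y) * r = m" by (simp add: algebra_simps)
      then have "(z - s * y) * r \<in> M" using ms(2) by simp
      then have "z - s * y \<in> I" using sub by blast
      moreover have "s * y \<in> I" using li_mult[OF I y(1)] .
      ultimately have "(z - s * y) + s * y \<in> I" using li_add[OF I] by blast
      then show "z \<in> I" by simp
    qed
    then show "I = UNIV" by blast
  qed
  note H = this
  show ?thesis unfolding maximal_left_ideal_def
  proof (intro conjI allI impI)
    fix I assume I: "left_ideal I \<and> {y. y * r \<in> M} \<subseteq> I \<and> I \<noteq> UNIV"
    show "I = {y. y * r \<in> M}"
    proof (rule ccontr)
      assume "I \<noteq> {y. y * r \<in> M}"
      then have "\<not> I \<subseteq> {y. y * r \<in> M}" using I by blast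
      then show False using H I by blast
    qed
  qed (use LC ne in auto)
qed

lemma jac_right: "x \<in> jacobson \<Longrightarrow> maximal_left_ideal M \<Longrightarrow> x * r \<in> M"
proof -
  assume x: "x \<in> jacobson" and M: "maximal_left_ideal M"
  show ?thesis
  proof (cases "r \<in> M")
    case True then show ?thesis using M li_mult by (auto simp: maximal_left_ideal_def)
  next
    case False
    then have "maximal_left_ideal {y. y * r \<in> M}" using colon_max M by blast
    then show ?thesis using x unfolding jacobson_def by blast
  qed
qed

lemma jac_sub_max:
  fixes P :: "'a::ring_1 set"
  assumes P: "maximal_ideal P"
  shows "jacobson \<subseteq> P"
proof -
  have TP: "two_sided_ideal P" and PU: "P \<noteq> UNIV" using P by (auto simp: maximal_ideal_def)
  have "1 \<notin> P" using li_UNIV[OF ts_left[OF TP]] PU by blast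
  then obtain M where M: "maximal_left_ideal M" "P \<subseteq> M" using krull_left[OF ts_left[OF TP]] by blast
  define A where "A = {x. \<forall>r. x * r \<in> M}"
  have LM: "left_ideal M" using M by (simp add: maximal_left_ideal_def)
  have TA: "two_sided_ideal A" unfolding two_sided_ideal_def
  proof (intro conjI ballI allI impI)
    show "0 \<in> A" using LM unfolding A_def left_ideal_def by simp
  next
    fix x y assume "x \<in> A" "y \<in> A"
    then show "x + y \<in> A" unfolding A_def using li_add[OF LM] by (simp add: distrib_right)
  next
    fix r x assume "x \<in> A"
    then show "r * x \<in> A" unfolding A_def using li_mult[OF LM] by (simp add: mult.assoc)
  next
    fix r x assume "x \<in> A"
    then show "x * r \<in> A" unfolding A_def by (simp add: mult.assoc)
  qed
  have "P \<subseteq> A" using TP M(2) unfolding A_def by (auto dest: ts_rmult)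
  moreover have "A \<noteq> UNIV"
  proof
    assume "A = UNIV" then have "1 * 1 \<in> M" unfolding A_def by blast
    then show False using M(1) li_UNIV LM by (auto simp: maximal_left_ideal_def)
  qed
  ultimately have "A = P" using mi_rule[OF P TA] by blast
  moreover have "jacobson \<subseteq> A" unfolding A_def using jac_right M(1) by blast
  ultimately show ?thesis by simp
qed

lemma max_prime:
  fixes P :: "'a::ring_1 set"
  assumes P: "maximal_ideal P" and xy: "\<forall>t. x * t * y \<in> P"
  shows "x \<in> P \<or> y \<in> P"
proof (rule ccontr)
  assume nn: "\<not> (x \<in> P \<or> y \<in> P)"
  have TP: "two_sided_ideal P" using P by (simp add: maximal_ideal_def)
  define K where "K = {z. \<forall>t. z * t * y \<in> P}"
  have LP: "left_ideal P" using ts_left[OF TP] .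
  have TK: "two_sided_ideal K" unfolding two_sided_ideal_def
  proof (intro conjI ballI allI impI)
    show "0 \<in> K" using LP unfolding K_def left_ideal_def by simp
  next
    fix a b assume "a \<in> K" "b \<in> K"
    then show "a + b \<in> K" unfolding K_def using li_add[OF LP] by (simp add: distrib_right)
  next
    fix r a assume "a \<in> K"
    then show "r * a \<in> K" unfolding K_def using li_mult[OF LP] by (simp add: mult.assoc)
  next
    fix r a assume xk: "a \<in> K"
    have "a * r * t * y \<in> P" for t
    proof -
      have "a * (r * t) * y \<in> P" using xk unfolding K_def by blast
      then show "a * r * t * y \<in> P" by (simp add: mult.assoc)
    qed
    then show "a * r \<in> K" unfolding K_def by blast
  qed
  have "P \<subseteq> K" unfolding K_def using TP by (auto dest: ts_rmult)
  moreover have "K \<noteq> UNIV" proof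
    assume "K = UNIV" then have "1 * 1 * y \<in> P" unfolding K_def by blast
    then show False using nn by simp
  qed
  ultimately have "K = P" using mi_rule[OF P TK] by blast
  moreover have "x \<in> K" using xy K_def by blast
  ultimately show False using nn by blast
qed

lemma idem_cases:
  fixes P :: "'a::ring_1 set"
  assumes P: "maximal_ideal P" and e: "\<forall>r. e * r * (1 - e) \<in> jacobson"
  shows "e \<in> P \<or> 1 - e \<in> P"
  using max_prime[OF P] e jac_sub_max[OF P] by blast

lemma not_both:
  fixes P :: "'a::ring_1 set"
  assumes P: "maximal_ideal P" "e \<in> P" "1 - e \<in> P"
  shows False
proof -
  have L: "left_ideal P" using P by (simp add: maximal_ideal_def ts_left)
  have "e + (1 - e) \<in> P" using li_add[OF L P(2,3)] .
  then show False using li_UNIV[OF L] P(1) by (simp add: maximal_ideal_def)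
qed

lemma ig_mem: "(\<And>I. two_sided_ideal I \<Longrightarrow> u \<in> I \<Longrightarrow> x \<in> I) \<Longrightarrow> x \<in> ideal_gen {u}"
  unfolding ideal_gen_def by blast

lemma ig_elem: "x \<in> ideal_gen {u} \<Longrightarrow> two_sided_ideal I \<Longrightarrow> u \<in> I \<Longrightarrow> x \<in> I"
  unfolding ideal_gen_def by blast

lemma full_iff: "full (u::'a::ring_1) \<longleftrightarrow> (\<forall>P. maximal_ideal P \<longrightarrow> u \<notin> P)"
proof
  assume "full u"
  show "\<forall>P. maximal_ideal P \<longrightarrow> u \<notin> P"
  proof (intro allI impI notI)
    fix P assume P: "maximal_ideal P" "u \<in> P"
    have TP: "two_sided_ideal P" and PU: "P \<noteq> UNIV" using P(1) by (simp_all add: maximal_ideal_def)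
    have "ideal_gen {u} \<subseteq> P" unfolding ideal_gen_def using TP P(2) by (intro Inter_lower) simp
    then show False using \<open>full u\<close> PU unfolding full_def by blast
  qed
next
  assume H: "\<forall>P. maximal_ideal P \<longrightarrow> u \<notin> P"
  have T: "two_sided_ideal (ideal_gen {u})" unfolding two_sided_ideal_def
  proof (intro conjI ballI allI impI)
    show "0 \<in> ideal_gen {u}" by (rule ig_mem) (simp add: two_sided_ideal_def)
  next
    fix a b assume "a \<in> ideal_gen {u}" "b \<in> ideal_gen {u}"
    then show "a + b \<in> ideal_gen {u}" by (intro ig_mem li_add ts_left) (auto dest: ig_elem)
  next
    fix c a assume "a \<in> ideal_gen {u}"
    then show "c * a \<in> ideal_gen {u}" by (intro ig_mem li_mult ts_left) (auto dest: ig_elem)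
  next
    fix c a assume "a \<in> ideal_gen {u}"
    then show "a * c \<in> ideal_gen {u}" by (intro ig_mem ts_rmult) (auto dest: ig_elem)
  qed
  have uin: "u \<in> ideal_gen {u}" unfolding ideal_gen_def by blast
  show "full u" unfolding full_def
  proof (rule ccontr)
    assume "ideal_gen {u} \<noteq> UNIV"
    then have "1 \<notin> ideal_gen {u}" using li_UNIV[OF ts_left[OF T]] by blast
    then obtain P where "maximal_ideal P" "ideal_gen {u} \<subseteq> P" using krull_ts[OF T] by blast
    then show False using H uin by blast
  qed
qed

lemma max_diff: "maximal_ideal P \<Longrightarrow> x \<in> P \<Longrightarrow> y \<in> P \<Longrightarrow> x - y \<in> P"
  by (simp add: li_diff maximal_ideal_def ts_left)

lemma max_add: "maximal_ideal P \<Longrightarrow> x \<in> P \<Longrightarrow> y \<in> P \<Longrightarrow> x + y \<in> P"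
  by (simp add: li_add maximal_ideal_def ts_left)

theorem lemma2p2:
  fixes a :: "'a::ring_1"
  shows "feckly_clean a \<longleftrightarrow>
    (\<exists>e. Vel (a - 1) \<subseteq> Vel e \<and> Vel e \<subseteq> MaxSpec - Vel a \<and>
         (\<forall>r. e * r * (1 - e) \<in> jacobson))"
proof
  assume "feckly_clean a"
  then obtain e u where u: "full u" and a: "a = e + u" and e: "\<forall>r. e * r * (1 - e) \<in> jacobson"
    unfolding feckly_clean_def by blast
  have uP: "\<And>P. maximal_ideal P \<Longrightarrow> u \<notin> P" using u full_iff by blast
  have 1: "Vel (a - 1) \<subseteq> Vel e"
  proof (clarsimp simp: Vel_iff)
    fix P assume P: "maximal_ideal P" "a - 1 \<in> P"
    show "e \<in> P"
    proof (rule ccontr)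
      assume "e \<notin> P"
      then have "1 - e \<in> P" using idem_cases[OF P(1) e] by blast
      then have "(a - 1) + (1 - e) \<in> P" using max_add P by blast
      then have "u \<in> P" using a by (simp add: algebra_simps)
      then show False using uP P by blast
    qed
  qed
  have 2: "Vel e \<subseteq> MaxSpec - Vel a"
  proof (clarsimp simp: Vel_iff MaxSpec_def)
    fix P assume P: "maximal_ideal P" "e \<in> P" "a \<in> P"
    then have "a - e \<in> P" using max_diff by blast
    then show False using a uP P by simp
  qed
  show "\<exists>e. Vel (a - 1) \<subseteq> Vel e \<and> Vel e \<subseteq> MaxSpec - Vel a \<and> (\<forall>r. e * r * (1 - e) \<in> jacobson)"
    using 1 2 e by blast
next
  assume "\<exists>e. Vel (a - 1) \<subseteq> Vel e \<and> Vel e \<subseteq> MaxSpec - Vel a \<and> (\<forall>r. e * r * (1 - e) \<in> jacobson)"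
  then obtain e where V1: "Vel (a - 1) \<subseteq> Vel e" and V2: "Vel e \<subseteq> MaxSpec - Vel a"
    and e: "\<forall>r. e * r * (1 - e) \<in> jacobson" by blast
  have "\<forall>P. maximal_ideal P \<longrightarrow> a - e \<notin> P"
  proof (intro allI impI notI)
    fix P assume P: "maximal_ideal P" and ae: "a - e \<in> P"
    show False
    proof (cases "e \<in> P")
      case True
      then have "(a - e) + e \<in> P" using max_add P ae by blast
      then have "a \<in> P" by simp
      then show False using V2 P True by (auto simp: Vel_iff MaxSpec_def)
    next
      case False
      then have "1 - e \<in> P" using idem_cases[OF P e] by blast
      then have "(a - e) - (1 - e) \<in> P" using max_diff P ae by blast
      then have "a - 1 \<in> P" by (simp add: algebra_simps)
      then show False using V1 P False by (auto simp: Vel_iff)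
    qed
  qed
  then have "full (a - e)" using full_iff by blast
  then show "feckly_clean a" unfolding feckly_clean_def using e
    by (intro exI[of _ e] exI[of _ "a - e"]) auto
qed

end
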